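(* Let $f:[0,T]\times\mathbb R^n\times\mathbb D[0,T]\times\mathbb R\times\mathbb R^{1\times d}\times\mathbb L^2(E,\nu)\to\mathbb R$ and $\xi:\mathbb R^n\to\mathbb R$ satisfy Assumptions (MS) and (ML) below. For $m\in\mathbb N$ define $$f_m\bigl(r,x,(q_v)_{v\in[r,T]},y,z,\psi\bigr):=f\bigl(r,x,(\varphi_m(q_v))_{v\in[r,T]},\varphi_m(y),\varphi_m(z),\varphi_m(\psi\circ\zeta_m)\bigr),$$ where $\varphi_m(x)=(-m)\vee(x\wedge m)$ is applied componentwise to $z$ and $\psi$, and $(\psi\circ\zeta_m)(e):=\psi(e)\mathbf 1_{|e|\ge1/m}$ (componentwise). Then $(f_m)_{m\in\mathbb N}$ (together with $\xi$) satisfy Assumptions (MS) and (ML) uniformly in $m\in\mathbb N$. Moreover, for each $m$, $f_m$ is a.e. bounded and globally Lipschitz in $(q,y,z,\psi)$: there is $L_m>0$ with $$|f_m(t,x,(q_v)_{v\in[t,T]},y,z,\psi)-f_m(t,x,(q'_v)_{v\in[t,T]},y',z',\psi')|\le L_m\Bigl(\sup_{v\in[t,T]}|q_v-q'_v|+|y-y'|+|z-z'|+\|\psi-\psi'\|_{\mathbb L^2(\nu)}\Bigr)$$ for all arguments, for a.e. $t$.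
   Context: Setting: $T>0$, $d,k,n\in\mathbb N$. $k$ $\sigma$-finite measures $\nu^1,\dots,\nu^k$ on $\mathbb R_0=\mathbb R\setminus\{0\}$ with $\int|e|^2\nu^i(de)<\infty$ (compensators $\nu^i(de)dt$ of independent Poisson random measures $\mu^i$ on the filtered probability space generated by them and a $d$-dimensional Brownian motion, with completed canonical filtration $\mathbb F$). $E=\mathbb R_0^k$; $\mathbb L^2(E,\nu)$ = $\psi=(\psi^i)_{i\le k}$, $\psi^i:\mathbb R_0\to\mathbb R$ Borel, with $\|\psi\|^2_{\mathbb L^2(\nu)}=\sum_i\int|\psi^i|^2d\nu^i<\infty$, and $\int_E g(\psi(e))\nu(de):=\sum_i\int g(\psi^i(e))\nu^i(de)$; $\|\psi\|_{\mathbb L^\infty(\nu)}$ the $\nu$-essential sup. $\mathbb D[0,T]$ real càdlàg functions. $\mathbb E_{\mathcal F_t}$ conditional expectation. $j_\gamma(u)=\frac1\gamma(e^{\gamma u}-1-\gamma u)$. Assumption (MS): (i) for every $(x,y,z,\psi)$ and every càdlàg adapted $(Y_v)$, $t\mapsto\mathbb E_{\mathcal F_t}f(t,x,(Y_v)_{v\in[t,T]},y,z,\psi)$ is progressively measurable; (ii) there are constants $\beta,\delta\ge0,\gamma>0$ and a positive non-random function $l$ on $[0,T]$ such that for every $(x,q,y,z,\psi)$, for $dt$-a.e. $t$, $-l_t-\delta\sup_{v\in[t,T]}|q_v|-\beta|y|-\frac\gamma2|z|^2-\int_Ej_\gamma(-\psi(e))\nu(de)\le f(t,x,(q_v)_{v\in[t,T]},y,z,\psi)\le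 l_t+\delta\sup_{v\in[t,T]}|q_v|+\beta|y|+\frac\gamma2|z|^2+\int_Ej_\gamma(\psi(e))\nu(de)$; (iii) $\sup_x|\xi(x)|<\infty$, $\sup_tl_t<\infty$. Assumption (ML): for each $M>0$ there is $K_M>0$, and constants $K_\xi\ge0,\rho\ge0,\alpha\in(0,1]$, such that for all arguments with $|y|,|y'|,\|\psi\|_{\mathbb L^\infty(\nu)},\|\psi'\|_{\mathbb L^\infty(\nu)},\sup_v|q_v|,\sup_v|q'_v|\le M$, for $dt$-a.e. $t$: $|f(t,x,(q_v),y,z,\psi)-f(t,x,(q'_v),y',z',\psi')|\le K_M(\sup_{v\in[t,T]}|q_v-q'_v|+|y-y'|+\|\psi-\psi'\|_{\mathbb L^2(\nu)})+K_M(1+|z|+|z'|+\|\psi\|_{\mathbb L^2(\nu)}+\|\psi'\|_{\mathbb L^2(\nu)})|z-z'|$; $|f(t,x,(q_v),y,z,\psi)-f(t,x',(q_v),y,z,\psi)|\le K_M(1+[|x|\vee|x'|]^\rho+|z|^2+\|\psi\|^2_{\mathbb L^2(\nu)})|x-x'|^\alpha$; $|\xi(x)-\xi(x')|\le K_\xi|x-x'|^\alpha$. *)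

theory Defs
  imports "HOL-Probability.Probability"
begin

definition phi :: "nat \<Rightarrow> real \<Rightarrow> real" where
  "phi m u = max (- real m) (min u (real m))"

definition phiv :: "nat \<Rightarrow> real^'d \<Rightarrow> real^'d" where
  "phiv m z = (\<chi> i. phi m (z $ i))"

definition zeta_trunc :: "nat \<Rightarrow> ('k \<Rightarrow> real \<Rightarrow> real) \<Rightarrow> ('k \<Rightarrow> real \<Rightarrow> real)" where
  "zeta_trunc m \<psi> = (\<lambda>i e. if \<bar>e\<bar> \<ge> 1 / real m then \<psi> i e else 0)"

definition fm ::
  "(real \<Rightarrow> real^'n \<Rightarrow> (real \<Rightarrow> real) \<Rightarrow> real \<Rightarrow> real^'d \<Rightarrow> ('k \<Rightarrow> real \<Rightarrow> real) \<Rightarrow> real)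
   \<Rightarrow> nat \<Rightarrow> (real \<Rightarrow> real^'n \<Rightarrow> (real \<Rightarrow> real) \<Rightarrow> real \<Rightarrow> real^'d \<Rightarrow> ('k \<Rightarrow> real \<Rightarrow> real) \<Rightarrow> real)"
  where
  "fm f m = (\<lambda>r x q y z \<psi>. f r x (\<lambda>v. phi m (q v)) (phi m y) (phiv m z)
                              (\<lambda>i e. phi m (zeta_trunc m \<psi> i e)))"

definition jg :: "real \<Rightarrow> real \<Rightarrow> real" where
  "jg \<gamma> u = (exp (\<gamma> * u) - 1 - \<gamma> * u) / \<gamma>"

text \<open>Standing assumptions on the compensator measures nu^i on R_0 (identified with
  Borel measures on R not charging 0).\<close>
definition levy_measures :: "('k \<Rightarrow> real measure) \<Rightarrow> bool" where
  "levy_measures \<nu> \<longleftrightarrow> (\<forall>i. sets (\<nu> i) = sets borel \<and> sigma_finite_measure (\<nu> i)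
      \<and> emeasure (\<nu> i) {0} = 0 \<and> (\<integral>\<^sup>+ e. ennreal (e\<^sup>2) \<partial>\<nu> i) < \<infinity>)"

definition L2nu :: "('k \<Rightarrow> real measure) \<Rightarrow> ('k \<Rightarrow> real \<Rightarrow> real) set" where
  "L2nu \<nu> = {\<psi>. \<forall>i. \<psi> i \<in> borel_measurable (\<nu> i) \<and> (\<integral>\<^sup>+ e. ennreal ((\<psi> i e)\<^sup>2) \<partial>\<nu> i) < \<infinity>}"

definition L2norm :: "('k::finite \<Rightarrow> real measure) \<Rightarrow> ('k \<Rightarrow> real \<Rightarrow> real) \<Rightarrow> real" where
  "L2norm \<nu> \<psi> = sqrt (\<Sum>i\<in>UNIV. \<integral> e. (\<psi> i e)\<^sup>2 \<partial>\<nu> i)"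

definition Linfnorm :: "('k \<Rightarrow> real measure) \<Rightarrow> ('k \<Rightarrow> real \<Rightarrow> real) \<Rightarrow> ereal" where
  "Linfnorm \<nu> \<psi> = (SUP i. esssup (\<nu> i) (\<lambda>e. ereal \<bar>\<psi> i e\<bar>))"

definition Jint :: "real \<Rightarrow> ('k::finite \<Rightarrow> real measure) \<Rightarrow> ('k \<Rightarrow> real \<Rightarrow> real) \<Rightarrow> ereal" where
  "Jint \<gamma> \<nu> \<psi> = (\<Sum>i\<in>UNIV. enn2ereal (\<integral>\<^sup>+ e. ennreal (jg \<gamma> (\<psi> i e)) \<partial>\<nu> i))"

definition supq :: "real \<Rightarrow> real \<Rightarrow> (real \<Rightarrow> real) \<Rightarrow> real" where
  "supq t T q = Sup ((\<lambda>v. \<bar>q v\<bar>) ` {t..T})"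

definition cadlag_on :: "real \<Rightarrow> (real \<Rightarrow> real) \<Rightarrow> bool" where
  "cadlag_on T q \<longleftrightarrow> (\<forall>t\<in>{0..<T}. (q \<longlongrightarrow> q t) (at_right t))
                     \<and> (\<forall>t\<in>{0<..T}. \<exists>L. (q \<longlongrightarrow> L) (at_left t))"

definition filtered_space :: "'w measure \<Rightarrow> (real \<Rightarrow> 'w measure) \<Rightarrow> bool" where
  "filtered_space M F \<longleftrightarrow> prob_space M \<and> (\<forall>t. subalgebra M (F t))
      \<and> (\<forall>s t. s \<le> t \<longrightarrow> sets (F s) \<subseteq> sets (F t))"

definition progressive :: "(real \<Rightarrow> 'w measure) \<Rightarrow> real \<Rightarrow> (real \<Rightarrow> 'w \<Rightarrow> real) \<Rightarrow> bool" where
  "progressive F T X \<longleftrightarrow> (\<forall>t\<in>{0..T}.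
      (\<lambda>(s, \<omega>). X s \<omega>) \<in> borel_measurable (restrict_space borel {0..t} \<Otimes>\<^sub>M F t))"

definition cadlag_adapted :: "'w measure \<Rightarrow> (real \<Rightarrow> 'w measure) \<Rightarrow> real \<Rightarrow> (real \<Rightarrow> 'w \<Rightarrow> real) \<Rightarrow> bool" where
  "cadlag_adapted M F T Y \<longleftrightarrow> (\<forall>t\<in>{0..T}. Y t \<in> borel_measurable (F t))
      \<and> (\<forall>\<omega>\<in>space M. cadlag_on T (\<lambda>v. Y v \<omega>))"

type_synonym ('n, 'd, 'k) driver =
  "real \<Rightarrow> real^'n \<Rightarrow> (real \<Rightarrow> real) \<Rightarrow> real \<Rightarrow> real^'d \<Rightarrow> ('k \<Rightarrow> real \<Rightarrow> real) \<Rightarrow> real"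

definition MS_meas :: "('k \<Rightarrow> real measure) \<Rightarrow> 'w measure \<Rightarrow> (real \<Rightarrow> 'w measure) \<Rightarrow> real
    \<Rightarrow> ('n::finite, 'd::finite, 'k) driver \<Rightarrow> bool" where
  "MS_meas \<nu> M F T f \<longleftrightarrow> (\<forall>x y z \<psi> Y. \<psi> \<in> L2nu \<nu> \<longrightarrow> cadlag_adapted M F T Y \<longrightarrow>
      (\<exists>X. progressive F T X \<and> (\<forall>t\<in>{0..T}. AE \<omega> in M.
          X t \<omega> = real_cond_exp M (F t) (\<lambda>\<omega>. f t x (\<lambda>v. Y v \<omega>) y z \<psi>) \<omega>)))"

definition MS_growth :: "('k::finite \<Rightarrow> real measure) \<Rightarrow> real \<Rightarrow> real \<Rightarrow> real \<Rightarrow> real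
    \<Rightarrow> (real \<Rightarrow> real) \<Rightarrow> ('n::finite, 'd::finite, 'k) driver \<Rightarrow> bool" where
  "MS_growth \<nu> T \<beta> \<delta> \<gamma> l f \<longleftrightarrow> (\<forall>x q y z \<psi>. cadlag_on T q \<longrightarrow> \<psi> \<in> L2nu \<nu> \<longrightarrow>
      (AE t in lborel. t \<in> {0..T} \<longrightarrow>
        ereal (- l t - \<delta> * supq t T q - \<beta> * \<bar>y\<bar> - \<gamma> / 2 * (norm z)\<^sup>2)
            - Jint \<gamma> \<nu> (\<lambda>i e. - \<psi> i e) \<le> ereal (f t x q y z \<psi>)
        \<and> ereal (f t x q y z \<psi>) \<le>
            ereal (l t + \<delta> * supq t T q + \<beta> * \<bar>y\<bar> + \<gamma> / 2 * (norm z)\<^sup>2) + Jint \<gamma> \<nu> \<psi>))"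

definition MS_with :: "('k::finite \<Rightarrow> real measure) \<Rightarrow> 'w measure \<Rightarrow> (real \<Rightarrow> 'w measure) \<Rightarrow> real
    \<Rightarrow> real \<Rightarrow> real \<Rightarrow> real \<Rightarrow> (real \<Rightarrow> real) \<Rightarrow> ('n::finite, 'd::finite, 'k) driver \<Rightarrow> (real^'n::finite \<Rightarrow> real) \<Rightarrow> bool" where
  "MS_with \<nu> M F T \<beta> \<delta> \<gamma> l f \<xi> \<longleftrightarrow> MS_meas \<nu> M F T f
      \<and> \<beta> \<ge> 0 \<and> \<delta> \<ge> 0 \<and> \<gamma> > 0 \<and> (\<forall>t\<in>{0..T}. l t > 0)
      \<and> MS_growth \<nu> T \<beta> \<delta> \<gamma> l f
      \<and> bdd_above (range (\<lambda>x. \<bar>\<xi> x\<bar>)) \<and> bdd_above (l ` {0..T})"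

definition MS :: "('k::finite \<Rightarrow> real measure) \<Rightarrow> 'w measure \<Rightarrow> (real \<Rightarrow> 'w measure) \<Rightarrow> real
    \<Rightarrow> ('n::finite, 'd::finite, 'k) driver \<Rightarrow> (real^'n::finite \<Rightarrow> real) \<Rightarrow> bool" where
  "MS \<nu> M F T f \<xi> \<longleftrightarrow> (\<exists>\<beta> \<delta> \<gamma> l. MS_with \<nu> M F T \<beta> \<delta> \<gamma> l f \<xi>)"

definition Lip_cond :: "('k::finite \<Rightarrow> real measure) \<Rightarrow> real \<Rightarrow> (real \<Rightarrow> real) \<Rightarrow> real \<Rightarrow> real
    \<Rightarrow> ('n::finite, 'd::finite, 'k) driver \<Rightarrow> bool" where
  "Lip_cond \<nu> T K \<rho> \<alpha> f \<longleftrightarrow>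
    (\<forall>Mb>0. \<forall>x q q' y y' z z' \<psi> \<psi>'.
      cadlag_on T q \<and> cadlag_on T q' \<and> \<psi> \<in> L2nu \<nu> \<and> \<psi>' \<in> L2nu \<nu>
      \<and> \<bar>y\<bar> \<le> Mb \<and> \<bar>y'\<bar> \<le> Mb \<and> Linfnorm \<nu> \<psi> \<le> ereal Mb \<and> Linfnorm \<nu> \<psi>' \<le> ereal Mb
      \<and> supq 0 T q \<le> Mb \<and> supq 0 T q' \<le> Mb \<longrightarrow>
      (AE t in lborel. t \<in> {0..T} \<longrightarrow>
        \<bar>f t x q y z \<psi> - f t x q' y' z' \<psi>'\<bar>
          \<le> K Mb * (supq t T (\<lambda>v. q v - q' v) + \<bar>y - y'\<bar> + L2norm \<nu> (\<lambda>i e. \<psi> i e - \<psi>' i e))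
            + K Mb * (1 + norm z + norm z' + L2norm \<nu> \<psi> + L2norm \<nu> \<psi>') * norm (z - z')))
  \<and> (\<forall>Mb>0. \<forall>x x' q y z \<psi>.
      cadlag_on T q \<and> \<psi> \<in> L2nu \<nu> \<and> \<bar>y\<bar> \<le> Mb \<and> Linfnorm \<nu> \<psi> \<le> ereal Mb \<and> supq 0 T q \<le> Mb \<longrightarrow>
      (AE t in lborel. t \<in> {0..T} \<longrightarrow>
        \<bar>f t x q y z \<psi> - f t x' q y z \<psi>\<bar>
          \<le> K Mb * (1 + (max (norm x) (norm x')) powr \<rho> + (norm z)\<^sup>2 + (L2norm \<nu> \<psi>)\<^sup>2)
                 * (norm (x - x')) powr \<alpha>))"

definition MLa_with :: "('k::finite \<Rightarrow> real measure) \<Rightarrow> real \<Rightarrow> (real \<Rightarrow> real) \<Rightarrow> real \<Rightarrow> real \<Rightarrow> real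
    \<Rightarrow> ('n::finite, 'd::finite, 'k) driver \<Rightarrow> (real^'n::finite \<Rightarrow> real) \<Rightarrow> bool" where
  "MLa_with \<nu> T K K\<xi> \<rho> \<alpha> f \<xi> \<longleftrightarrow> (\<forall>Mb>0. K Mb > 0) \<and> K\<xi> \<ge> 0 \<and> \<rho> \<ge> 0 \<and> 0 < \<alpha> \<and> \<alpha> \<le> 1
      \<and> Lip_cond \<nu> T K \<rho> \<alpha> f
      \<and> (\<forall>x x'. \<bar>\<xi> x - \<xi> x'\<bar> \<le> K\<xi> * (norm (x - x')) powr \<alpha>)"

definition MLa :: "('k::finite \<Rightarrow> real measure) \<Rightarrow> real \<Rightarrow> ('n::finite, 'd::finite, 'k) driver \<Rightarrow> (real^'n::finite \<Rightarrow> real) \<Rightarrow> bool" where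
  "MLa \<nu> T f \<xi> \<longleftrightarrow> (\<exists>K K\<xi> \<rho> \<alpha>. MLa_with \<nu> T K K\<xi> \<rho> \<alpha> f \<xi>)"

end

theory Submission
  imports Defs
begin


lemma phi_abs_le: "\<bar>phi m u\<bar> \<le> \<bar>u\<bar>" unfolding phi_def by auto
lemma phi_abs_le_m: "\<bar>phi m u\<bar> \<le> real m" unfolding phi_def by auto
lemma phi_lip: "\<bar>phi m a - phi m b\<bar> \<le> \<bar>a - b\<bar>" unfolding phi_def by auto
lemma phi_between: "(0 \<le> u \<longrightarrow> 0 \<le> phi m u \<and> phi m u \<le> u) \<and> (u \<le> 0 \<longrightarrow> u \<le> phi m u \<and> phi m u \<le> 0)"
  unfolding phi_def by auto

lemma phiv_norm_le: "norm (phiv m z) \<le> norm z"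
  unfolding phiv_def norm_vec_def by (rule L2_set_mono) (auto simp: phi_abs_le)
lemma phiv_lip: "norm (phiv m z - phiv m z') \<le> norm (z - z')"
  unfolding phiv_def norm_vec_def by (rule L2_set_mono) (auto simp: phi_lip)
lemma phiv_norm_m: "norm (phiv m (z::real^'d)) \<le> real CARD('d) * real m"
proof -
  have "norm (phiv m z) \<le> (\<Sum>i\<in>UNIV. norm (phiv m z $ i))"
    unfolding norm_vec_def by (rule L2_set_le_sum) auto
  also have "\<dots> \<le> (\<Sum>i\<in>(UNIV::'d set). real m)"
    by (rule sum_mono) (auto simp: phiv_def phi_abs_le_m)
  finally show ?thesis by simp
qed

lemma jg_nonneg: assumes "\<gamma> > 0" shows "jg \<gamma> u \<ge> 0"
proof -
  have "1 + \<gamma> * u \<le> exp (\<gamma> * u)" by (rule exp_ge_add_one_self)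
  thus ?thesis unfolding jg_def using assms by (intro divide_nonneg_pos) linarith+
qed

lemma jg_mono: assumes "\<gamma> > 0" "(0 \<le> u \<and> u \<le> v) \<or> (v \<le> u \<and> u \<le> 0)"
  shows "jg \<gamma> u \<le> jg \<gamma> v"
proof -
  have key: "exp (\<gamma> * u) - \<gamma> * u \<le> exp (\<gamma> * v) - \<gamma> * v"
  proof (cases "0 \<le> u \<and> u \<le> v")
    case True
    have "exp (\<gamma> * v) = exp (\<gamma> * u) * exp (\<gamma> * (v-u))" by (simp add: exp_add[symmetric] algebra_simps)
    also have "\<dots> \<ge> exp (\<gamma> * u) * (1 + \<gamma> * (v-u))"
      by (intro mult_left_mono exp_ge_add_one_self) auto
    finally have "exp (\<gamma> * v) \<ge> exp (\<gamma> * u) + exp (\<gamma> * u) * (\<gamma> * (v-u))" by (simp add: algebra_simps)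
    moreover have "exp (\<gamma> * u) * (\<gamma> * (v-u)) \<ge> 1 * (\<gamma> * (v-u))"
      using True assms(1) by (intro mult_right_mono) auto
    ultimately show ?thesis by (simp add: algebra_simps)
  next
    case False
    with assms have vu: "v \<le> u" "u \<le> 0" by auto
    have "exp (\<gamma> * v) = exp (\<gamma> * u) * exp (\<gamma> * (v-u))" by (simp add: exp_add[symmetric] algebra_simps)
    also have "\<dots> \<ge> exp (\<gamma> * u) * (1 + \<gamma> * (v-u))"
      by (intro mult_left_mono exp_ge_add_one_self) auto
    finally have "exp (\<gamma> * v) \<ge> exp (\<gamma> * u) + exp (\<gamma> * u) * (\<gamma> * (v-u))" by (simp add: algebra_simps)
    moreover have "\<gamma> * u \<le> 0" using vu assms(1) by (simp add: mult_nonneg_nonpos)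
    moreover have "exp (\<gamma> * u) * (\<gamma> * (u-v)) \<le> 1 * (\<gamma> * (u-v))"
      using vu assms(1) \<open>\<gamma> * u \<le> 0\<close> by (intro mult_right_mono) auto
    ultimately show ?thesis by (simp add: algebra_simps)
  qed
  thus ?thesis unfolding jg_def using assms(1) by (simp add: divide_right_mono)
qed

lemma jg_trunc: "\<gamma> > 0 \<Longrightarrow> jg \<gamma> (phi m (zeta_trunc m \<psi> i e)) \<le> jg \<gamma> (\<psi> i e)"
  "\<gamma> > 0 \<Longrightarrow> jg \<gamma> (- phi m (zeta_trunc m \<psi> i e)) \<le> jg \<gamma> (- \<psi> i e)"
  unfolding zeta_trunc_def
  by (auto intro!: jg_mono simp: phi_def)

lemma cadlag_bdd: assumes "cadlag_on T q" shows "bdd_above ((\<lambda>v. \<bar>q v\<bar>) ` {0..T})"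
proof -
  have loc: "\<exists>U. open U \<and> t \<in> U \<and> bdd_above ((\<lambda>v. \<bar>q v\<bar>) ` (U \<inter> {0..T}))" if t: "t \<in> {0..T}" for t
  proof -
    obtain d1 B1 where d1: "d1 > 0" "\<forall>v. t < v \<and> v < t + d1 \<and> v \<le> T \<longrightarrow> \<bar>q v\<bar> \<le> B1"
    proof (cases "t < T")
      case True
      hence "(q \<longlongrightarrow> q t) (at_right t)" using assms t unfolding cadlag_on_def by auto
      hence "eventually (\<lambda>v. dist (q v) (q t) < 1) (at_right t)" by (rule tendstoD) simp
      then obtain b where b: "b > t" "\<forall>v>t. v < b \<longrightarrow> dist (q v) (q t) < 1"
        unfolding eventually_at_right_field by auto
      show thesis
        by (rule that[of "b - t" "\<bar>q t\<bar> + 1"]) (use b in \<open>auto simp: dist_real_def\<close>)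
    next
      case False
      show thesis by (rule that[of 1 0]) (use False in auto)
    qed
    obtain d2 B2 where d2: "d2 > 0" "\<forall>v. t - d2 < v \<and> v < t \<and> 0 \<le> v \<longrightarrow> \<bar>q v\<bar> \<le> B2"
    proof (cases "0 < t")
      case True
      have "t \<in> {0<..T}" using True t by auto
      then obtain L where "(q \<longlongrightarrow> L) (at_left t)" using assms unfolding cadlag_on_def by blast
      hence "eventually (\<lambda>v. dist (q v) L < 1) (at_left t)" by (rule tendstoD) simp
      then obtain b where b: "b < t" "\<forall>v>b. v < t \<longrightarrow> dist (q v) L < 1"
        unfolding eventually_at_left_field by auto
      show thesis
        by (rule that[of "t - b" "\<bar>L\<bar> + 1"]) (use b in \<open>auto simp: dist_real_def\<close>)
    next
      case False
      show thesis by (rule that[of 1 0]) (use False in auto)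
    qed
    show ?thesis
    proof (intro exI conjI)
      show "open {t - d2 <..< t + d1}" by simp
      show "t \<in> {t - d2 <..< t + d1}" using d1 d2 by simp
      show "bdd_above ((\<lambda>v. \<bar>q v\<bar>) ` ({t - d2 <..< t + d1} \<inter> {0..T}))"
      proof (rule bdd_aboveI[where M = "max (max B1 B2) \<bar>q t\<bar>"])
        fix x assume "x \<in> (\<lambda>v. \<bar>q v\<bar>) ` ({t - d2 <..< t + d1} \<inter> {0..T})"
        then obtain v where v: "t - d2 < v" "v < t + d1" "0 \<le> v" "v \<le> T" and x: "x = \<bar>q v\<bar>" by auto
        consider "v < t" | "v = t" | "v > t" by linarith
        thus "x \<le> max (max B1 B2) \<bar>q t\<bar>"
          using d1(2) d2(2) v unfolding x by (cases; fastforce)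
      qed
    qed
  qed
  then obtain U where U: "\<forall>t\<in>{0..T}. open (U t) \<and> t \<in> U t \<and> bdd_above ((\<lambda>v. \<bar>q v\<bar>) ` (U t \<inter> {0..T}))"
    by metis
  obtain C' where C': "C' \<subseteq> {0..T}" "finite C'" "{0..T} \<subseteq> (\<Union>c\<in>C'. U c)"
    by (rule compactE_image[of "{0..T}" "{0..T}" U]) (use U in auto)
  have "(\<lambda>v. \<bar>q v\<bar>) ` {0..T} \<subseteq> (\<Union>c\<in>C'. (\<lambda>v. \<bar>q v\<bar>) ` (U c \<inter> {0..T}))"
    using C'(3) by blast
  moreover have "bdd_above (\<Union>c\<in>C'. (\<lambda>v. \<bar>q v\<bar>) ` (U c \<inter> {0..T}))"
    using C' U by auto
  ultimately show ?thesis by (metis bdd_above_mono)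
qed

lemma cadlag_phi: assumes "cadlag_on T q" shows "cadlag_on T (\<lambda>v. phi m (q v))"
  using assms unfolding cadlag_on_def phi_def
  by (fast intro: tendsto_max tendsto_min tendsto_const)

lemma supq_mono:
  assumes "bdd_above ((\<lambda>v. \<bar>g v\<bar>) ` {t..T})" "t \<le> T" "\<And>v. v \<in> {t..T} \<Longrightarrow> \<bar>f v\<bar> \<le> \<bar>g v\<bar>"
  shows "supq t T f \<le> supq t T g"
  unfolding supq_def
proof (rule cSUP_mono)
  fix n assume "n \<in> {t..T}"
  thus "\<exists>m\<in>{t..T}. \<bar>f n\<bar> \<le> \<bar>g m\<bar>" using assms(3) by blast
qed (use assms in auto)

lemma supq_le_const:
  assumes "t \<le> T" "\<And>v. v \<in> {t..T} \<Longrightarrow> \<bar>f v\<bar> \<le> c"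
  shows "supq t T f \<le> c"
  unfolding supq_def using assms by (intro cSUP_least) auto

lemma supq_nonneg:
  assumes "bdd_above ((\<lambda>v. \<bar>g v\<bar>) ` {t..T})" "t \<le> T"
  shows "0 \<le> supq t T g"
  unfolding supq_def using assms by (intro cSUP_upper2[where x = t]) auto

lemma cadlag_bdd_sub:
  assumes "cadlag_on T q" "0 \<le> t"
  shows "bdd_above ((\<lambda>v. \<bar>q v\<bar>) ` {t..T})"
  by (rule bdd_above_mono[OF cadlag_bdd[OF assms(1)]]) (use assms in auto)

lemma cadlag_bdd_diff:
  assumes "cadlag_on T q" "cadlag_on T q'" "0 \<le> t"
  shows "bdd_above ((\<lambda>v. \<bar>q v - q' v\<bar>) ` {t..T})"
proof -
  obtain A where A: "\<forall>v\<in>{t..T}. \<bar>q v\<bar> \<le> A" using cadlag_bdd_sub[OF assms(1,3)] by (auto simp: bdd_above_def)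
  obtain B where B: "\<forall>v\<in>{t..T}. \<bar>q' v\<bar> \<le> B" using cadlag_bdd_sub[OF assms(2,3)] by (auto simp: bdd_above_def)
  show ?thesis by (rule bdd_aboveI[where M = "A + B"]) (use A B in force)
qed



abbreviation trunc :: "nat \<Rightarrow> ('k \<Rightarrow> real \<Rightarrow> real) \<Rightarrow> ('k \<Rightarrow> real \<Rightarrow> real)" where
  "trunc m \<psi> \<equiv> (\<lambda>i e. phi m (zeta_trunc m \<psi> i e))"

lemma levy_meas_eq: "levy_measures \<nu> \<Longrightarrow> borel_measurable (\<nu> i) = borel_measurable borel"
  unfolding levy_measures_def by (intro measurable_cong_sets) auto

lemma levy_sq: assumes "levy_measures \<nu>" shows "integrable (\<nu> i) (\<lambda>e. e\<^sup>2)"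
proof (rule integrableI_nonneg)
  show "(\<lambda>e. e\<^sup>2) \<in> borel_measurable (\<nu> i)"
    by (subst levy_meas_eq[OF assms]) (intro borel_measurable_continuous_onI continuous_intros)
  show "(\<integral>\<^sup>+ e. ennreal (e\<^sup>2) \<partial>\<nu> i) < \<infinity>" using assms unfolding levy_measures_def by auto
qed auto

lemma L2nu_int: assumes "\<psi> \<in> L2nu \<nu>" shows "integrable (\<nu> i) (\<lambda>e. (\<psi> i e)\<^sup>2)"
proof (rule integrableI_nonneg)
  show "(\<lambda>e. (\<psi> i e)\<^sup>2) \<in> borel_measurable (\<nu> i)" using assms unfolding L2nu_def by (auto intro: borel_measurable_power)
  show "(\<integral>\<^sup>+ e. ennreal ((\<psi> i e)\<^sup>2) \<partial>\<nu> i) < \<infinity>" using assms unfolding L2nu_def by auto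
qed auto

lemma L2nu_diff_int: assumes "\<psi> \<in> L2nu \<nu>" "\<psi>' \<in> L2nu \<nu>"
  shows "integrable (\<nu> i) (\<lambda>e. (\<psi> i e - \<psi>' i e)\<^sup>2)"
proof (rule Bochner_Integration.integrable_bound)
  show "integrable (\<nu> i) (\<lambda>e. 2 * (\<psi> i e)\<^sup>2 + 2 * (\<psi>' i e)\<^sup>2)"
    using L2nu_int[OF assms(1)] L2nu_int[OF assms(2)] by auto
  show "(\<lambda>e. (\<psi> i e - \<psi>' i e)\<^sup>2) \<in> borel_measurable (\<nu> i)" using assms unfolding L2nu_def by (auto intro!: borel_measurable_power borel_measurable_diff)
  show "AE e in \<nu> i. norm ((\<psi> i e - \<psi>' i e)\<^sup>2) \<le> norm (2 * (\<psi> i e)\<^sup>2 + 2 * (\<psi>' i e)\<^sup>2)"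
  proof (rule AE_I2)
    fix e
    have "(\<psi> i e - \<psi>' i e)\<^sup>2 \<le> 2 * (\<psi> i e)\<^sup>2 + 2 * (\<psi>' i e)\<^sup>2"
      using sum_squares_ge_zero[of "\<psi> i e + \<psi>' i e" 0] by (simp add: power2_eq_square algebra_simps)
    thus "norm ((\<psi> i e - \<psi>' i e)\<^sup>2) \<le> norm (2 * (\<psi> i e)\<^sup>2 + 2 * (\<psi>' i e)\<^sup>2)" by simp
  qed
qed

lemma trunc_meas: assumes "levy_measures \<nu>" "\<psi> \<in> L2nu \<nu>"
  shows "trunc m \<psi> i \<in> borel_measurable (\<nu> i)"
proof -
  have "\<psi> i \<in> borel_measurable borel" using assms levy_meas_eq[OF assms(1)] unfolding L2nu_def by auto
  hence "trunc m \<psi> i \<in> borel_measurable borel" unfolding phi_def zeta_trunc_def by measurable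
  thus ?thesis by (subst levy_meas_eq[OF assms(1)])
qed

lemma trunc_abs: "\<bar>trunc m \<psi> i e\<bar> \<le> \<bar>\<psi> i e\<bar>"
  unfolding zeta_trunc_def using phi_abs_le by (auto simp: phi_def)

lemma trunc_lip: "\<bar>trunc m \<psi> i e - trunc m \<psi>' i e\<bar> \<le> \<bar>\<psi> i e - \<psi>' i e\<bar>"
  unfolding zeta_trunc_def using phi_lip by (auto simp: phi_def)

lemma trunc_small: "\<bar>trunc m \<psi> i e\<bar> \<le> real m ^ 2 * \<bar>e\<bar>"
proof (cases "\<bar>e\<bar> \<ge> 1 / real m \<and> m > 0")
  case True
  hence "m > 0" by auto
  with True have "1 \<le> real m * \<bar>e\<bar>" by (simp add: field_simps)
  hence "real m * 1 \<le> real m * (real m * \<bar>e\<bar>)" by (intro mult_left_mono) auto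
  moreover have "\<bar>trunc m \<psi> i e\<bar> \<le> real m" by (rule phi_abs_le_m)
  ultimately show ?thesis by (simp add: power2_eq_square mult.assoc)
qed (auto simp: zeta_trunc_def phi_def)

lemma L2nu_trunc: assumes "levy_measures \<nu>" "\<psi> \<in> L2nu \<nu>" shows "trunc m \<psi> \<in> L2nu \<nu>"
  unfolding L2nu_def
proof (intro CollectI allI conjI)
  fix i
  show "trunc m \<psi> i \<in> borel_measurable (\<nu> i)" by (rule trunc_meas[OF assms])
  have "(\<integral>\<^sup>+ e. ennreal ((trunc m \<psi> i e)\<^sup>2) \<partial>\<nu> i) \<le> (\<integral>\<^sup>+ e. ennreal ((\<psi> i e)\<^sup>2) \<partial>\<nu> i)"
    by (intro nn_integral_mono ennreal_leI) (metis abs_le_square_iff trunc_abs)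
  also have "\<dots> < \<infinity>" using assms(2) unfolding L2nu_def by auto
  finally show "(\<integral>\<^sup>+ e. ennreal ((trunc m \<psi> i e)\<^sup>2) \<partial>\<nu> i) < \<infinity>" .
qed

lemma L2norm_nonneg: "0 \<le> L2norm \<nu> g"
  unfolding L2norm_def by (intro real_sqrt_ge_zero sum_nonneg) simp

lemma L2norm_mono:
  assumes "\<And>i e. \<bar>g i e\<bar> \<le> \<bar>h i e\<bar>" "\<And>i. integrable (\<nu> i) (\<lambda>e. (h i e)\<^sup>2)"
  shows "L2norm \<nu> g \<le> L2norm \<nu> h"
  unfolding L2norm_def
proof (intro real_sqrt_le_mono sum_mono)
  fix i
  show "(\<integral>e. (g i e)\<^sup>2 \<partial>\<nu> i) \<le> (\<integral>e. (h i e)\<^sup>2 \<partial>\<nu> i)"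
  proof (cases "integrable (\<nu> i) (\<lambda>e. (g i e)\<^sup>2)")
    case True
    show ?thesis using True assms by (intro integral_mono) (auto simp: abs_le_square_iff)
  next
    case False
    thus ?thesis by (simp add: not_integrable_integral_eq)
  qed
qed

lemma Linf_trunc_mono: assumes "levy_measures \<nu>" "\<psi> \<in> L2nu \<nu>"
  shows "Linfnorm \<nu> (trunc m \<psi>) \<le> Linfnorm \<nu> \<psi>"
  unfolding Linfnorm_def
proof (rule SUP_mono')
  fix i
  show "esssup (\<nu> i) (\<lambda>e. ereal \<bar>trunc m \<psi> i e\<bar>) \<le> esssup (\<nu> i) (\<lambda>e. ereal \<bar>\<psi> i e\<bar>)"
    using trunc_meas[OF assms, of m i] trunc_abs by (intro esssup_mono) auto
qed

lemma Linf_trunc_m: assumes "levy_measures \<nu>" "\<psi> \<in> L2nu \<nu>"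
  shows "Linfnorm \<nu> (trunc m \<psi>) \<le> ereal (real m)"
  unfolding Linfnorm_def
proof (rule SUP_least)
  fix i
  show "esssup (\<nu> i) (\<lambda>e. ereal \<bar>trunc m \<psi> i e\<bar>) \<le> ereal (real m)"
    using trunc_meas[OF assms, of m i] phi_abs_le_m by (intro esssup_I) auto
qed

lemma Jint_mono: assumes "\<And>i e. jg \<gamma> (g i e) \<le> jg \<gamma> (h i e)"
  shows "Jint \<gamma> \<nu> g \<le> Jint \<gamma> \<nu> h"
  unfolding Jint_def
proof (rule sum_mono)
  fix i
  have "(\<integral>\<^sup>+ e. ennreal (jg \<gamma> (g i e)) \<partial>\<nu> i) \<le> (\<integral>\<^sup>+ e. ennreal (jg \<gamma> (h i e)) \<partial>\<nu> i)"
    by (intro nn_integral_mono ennreal_leI assms)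
  thus "enn2ereal (\<integral>\<^sup>+ e. ennreal (jg \<gamma> (g i e)) \<partial>\<nu> i) \<le> enn2ereal (\<integral>\<^sup>+ e. ennreal (jg \<gamma> (h i e)) \<partial>\<nu> i)"
    by (simp add: less_eq_ennreal.rep_eq)
qed

lemma Jint_bound:
  assumes "levy_measures \<nu>" "\<gamma> > 0" "\<And>i e. jg \<gamma> (g i e) \<le> c * e\<^sup>2" "c \<ge> 0"
  shows "Jint \<gamma> \<nu> g \<le> ereal (\<Sum>i\<in>UNIV. c * (\<integral>e. e\<^sup>2 \<partial>\<nu> i))"
proof -
  have "Jint \<gamma> \<nu> g \<le> (\<Sum>i\<in>UNIV. ereal (c * (\<integral>e. e\<^sup>2 \<partial>\<nu> i)))"
    unfolding Jint_def
  proof (rule sum_mono)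
    fix i
    have "(\<integral>\<^sup>+ e. ennreal (jg \<gamma> (g i e)) \<partial>\<nu> i) \<le> (\<integral>\<^sup>+ e. ennreal (c * e\<^sup>2) \<partial>\<nu> i)"
      by (intro nn_integral_mono ennreal_leI assms)
    also have "\<dots> = ennreal (\<integral>e. c * e\<^sup>2 \<partial>\<nu> i)"
      using levy_sq[OF assms(1), of i] assms(4) by (intro nn_integral_eq_integral) auto
    also have "\<dots> = ennreal (c * (\<integral>e. e\<^sup>2 \<partial>\<nu> i))" by simp
    finally have le: "(\<integral>\<^sup>+ e. ennreal (jg \<gamma> (g i e)) \<partial>\<nu> i) \<le> ennreal (c * (\<integral>e. e\<^sup>2 \<partial>\<nu> i))" .
    have nn: "0 \<le> c * (\<integral>e. e\<^sup>2 \<partial>\<nu> i)" using assms(4) by simp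
    show "enn2ereal (\<integral>\<^sup>+ e. ennreal (jg \<gamma> (g i e)) \<partial>\<nu> i) \<le> ereal (c * (\<integral>e. e\<^sup>2 \<partial>\<nu> i))"
      using le nn by (metis enn2ereal_ennreal less_eq_ennreal.rep_eq)
  qed
  thus ?thesis by simp
qed

lemma jg_zero: "jg \<gamma> 0 = 0" unfolding jg_def by simp

lemma jg_trunc_bound:
  assumes "\<gamma> > 0" "\<bar>u\<bar> \<le> real m" "\<bar>e\<bar> < 1 / real m \<longrightarrow> u = 0"
  shows "jg \<gamma> u \<le> (jg \<gamma> (real m) + jg \<gamma> (- real m)) * real m ^ 2 * e\<^sup>2"
proof (cases "\<bar>e\<bar> < 1 / real m \<or> m = 0")
  case True
  hence "u = 0" using assms(2,3) by auto
  thus ?thesis using jg_nonneg[OF assms(1)] by (simp add: jg_zero)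
next
  case False
  hence "m > 0" by auto
  with False have "1 \<le> real m * \<bar>e\<bar>" by (simp add: field_simps)
  hence "1 * 1 \<le> (real m * \<bar>e\<bar>) * (real m * \<bar>e\<bar>)" by (intro mult_mono) auto
  hence one: "1 \<le> real m ^ 2 * e\<^sup>2" by (simp add: power2_eq_square algebra_simps)
  have "jg \<gamma> u \<le> jg \<gamma> (real m) + jg \<gamma> (- real m)"
  proof (cases "u \<ge> 0")
    case True
    have "jg \<gamma> u \<le> jg \<gamma> (real m)" by (rule jg_mono[OF assms(1)]) (use True assms(2) in auto)
    moreover have "0 \<le> jg \<gamma> (- real m)" by (rule jg_nonneg[OF assms(1)])
    ultimately show ?thesis by linarith
  next
    case False
    have "jg \<gamma> u \<le> jg \<gamma> (- real m)" by (rule jg_mono[OF assms(1)]) (use False assms(2) in auto)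
    moreover have "0 \<le> jg \<gamma> (real m)" by (rule jg_nonneg[OF assms(1)])
    ultimately show ?thesis by linarith
  qed
  also have "\<dots> = (jg \<gamma> (real m) + jg \<gamma> (- real m)) * 1" by simp
  also have "\<dots> \<le> (jg \<gamma> (real m) + jg \<gamma> (- real m)) * (real m ^ 2 * e\<^sup>2)"
    using one jg_nonneg[OF assms(1)] by (intro mult_left_mono) (auto intro: add_nonneg_nonneg)
  finally show ?thesis by (simp add: mult.assoc)
qed

lemma Jint_trunc_bound:
  assumes "levy_measures \<nu>" "\<gamma> > 0"
  shows "Jint \<gamma> \<nu> (trunc m \<psi>) \<le> ereal (\<Sum>i\<in>UNIV. ((jg \<gamma> (real m) + jg \<gamma> (- real m)) * real m ^ 2) * (\<integral>e. e\<^sup>2 \<partial>\<nu> i))"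
    and "Jint \<gamma> \<nu> (\<lambda>i e. - trunc m \<psi> i e) \<le> ereal (\<Sum>i\<in>UNIV. ((jg \<gamma> (real m) + jg \<gamma> (- real m)) * real m ^ 2) * (\<integral>e. e\<^sup>2 \<partial>\<nu> i))"
proof -
  have c: "0 \<le> (jg \<gamma> (real m) + jg \<gamma> (- real m)) * real m ^ 2"
    using jg_nonneg[OF assms(2)] by (intro mult_nonneg_nonneg add_nonneg_nonneg) auto
  show "Jint \<gamma> \<nu> (trunc m \<psi>) \<le> ereal (\<Sum>i\<in>UNIV. ((jg \<gamma> (real m) + jg \<gamma> (- real m)) * real m ^ 2) * (\<integral>e. e\<^sup>2 \<partial>\<nu> i))"
    by (rule Jint_bound[OF assms _ c])
       (rule jg_trunc_bound[OF assms(2)], auto simp: phi_abs_le_m zeta_trunc_def phi_def)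
  show "Jint \<gamma> \<nu> (\<lambda>i e. - trunc m \<psi> i e) \<le> ereal (\<Sum>i\<in>UNIV. ((jg \<gamma> (real m) + jg \<gamma> (- real m)) * real m ^ 2) * (\<integral>e. e\<^sup>2 \<partial>\<nu> i))"
    by (rule Jint_bound[OF assms _ c])
       (rule jg_trunc_bound[OF assms(2)], auto simp: phi_abs_le_m zeta_trunc_def phi_def)
qed



lemma fm_eq: "fm f m t x q y z \<psi> = f t x (\<lambda>v. phi m (q v)) (phi m y) (phiv m z) (trunc m \<psi>)"
  unfolding fm_def by (rule refl)

lemma MS_meas_fm: assumes "levy_measures \<nu>" "MS_meas \<nu> M F T f" shows "MS_meas \<nu> M F T (fm f m)"
  unfolding MS_meas_def
proof (intro allI impI)
  fix x y z \<psi> Y assume \<psi>: "\<psi> \<in> L2nu \<nu>" and Y: "cadlag_adapted M F T Y"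
  have Y': "cadlag_adapted M F T (\<lambda>v \<omega>. phi m (Y v \<omega>))"
    unfolding cadlag_adapted_def
  proof (intro conjI ballI)
    fix t assume "t \<in> {0..T}"
    hence "Y t \<in> borel_measurable (F t)" using Y unfolding cadlag_adapted_def by auto
    thus "(\<lambda>\<omega>. phi m (Y t \<omega>)) \<in> borel_measurable (F t)" unfolding phi_def by measurable
  next
    fix \<omega> assume "\<omega> \<in> space M"
    thus "cadlag_on T (\<lambda>v. phi m (Y v \<omega>))" using Y unfolding cadlag_adapted_def by (auto intro: cadlag_phi)
  qed
  note E = assms(2)[unfolded MS_meas_def, rule_format, where x=x and y="phi m y" and z="phiv m z"
      and \<psi>="trunc m \<psi>" and Y="\<lambda>v \<omega>. phi m (Y v \<omega>)", OF L2nu_trunc[OF assms(1) \<psi>] Y']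
  obtain X where "progressive F T X" "\<forall>t\<in>{0..T}. AE \<omega> in M.
          X t \<omega> = real_cond_exp M (F t) (\<lambda>\<omega>. f t x (\<lambda>v. phi m (Y v \<omega>)) (phi m y) (phiv m z) (trunc m \<psi>)) \<omega>"
    using E by (elim exE conjE)
  thus "\<exists>X. progressive F T X \<and> (\<forall>t\<in>{0..T}. AE \<omega> in M.
          X t \<omega> = real_cond_exp M (F t) (\<lambda>\<omega>. fm f m t x (\<lambda>v. Y v \<omega>) y z \<psi>) \<omega>)"
    by (auto simp: fm_eq)
qed

lemma MS_growth_fm:
  assumes lv: "levy_measures \<nu>" and g: "\<gamma> > 0" and d: "\<delta> \<ge> 0" and b: "\<beta> \<ge> 0"
    and G: "MS_growth \<nu> T \<beta> \<delta> \<gamma> l f"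
  shows "MS_growth \<nu> T \<beta> \<delta> \<gamma> l (fm f m)"
  unfolding MS_growth_def
proof (intro allI impI)
  fix x q y z \<psi> assume q: "cadlag_on T q" and \<psi>: "\<psi> \<in> L2nu \<nu>"
  have "AE t in lborel. t \<in> {0..T} \<longrightarrow>
        ereal (- l t - \<delta> * supq t T (\<lambda>v. phi m (q v)) - \<beta> * \<bar>phi m y\<bar> - \<gamma> / 2 * (norm (phiv m z))\<^sup>2)
            - Jint \<gamma> \<nu> (\<lambda>i e. - trunc m \<psi> i e) \<le> ereal (fm f m t x q y z \<psi>)
        \<and> ereal (fm f m t x q y z \<psi>) \<le>
            ereal (l t + \<delta> * supq t T (\<lambda>v. phi m (q v)) + \<beta> * \<bar>phi m y\<bar> + \<gamma> / 2 * (norm (phiv m z))\<^sup>2) + Jint \<gamma> \<nu> (trunc m \<psi>)"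
    unfolding fm_eq
    by (rule G[unfolded MS_growth_def, rule_format, where x=x and q="\<lambda>v. phi m (q v)" and y="phi m y"
        and z="phiv m z" and \<psi>="trunc m \<psi>", OF cadlag_phi[OF q] L2nu_trunc[OF lv \<psi>]])
  thus "AE t in lborel. t \<in> {0..T} \<longrightarrow>
        ereal (- l t - \<delta> * supq t T q - \<beta> * \<bar>y\<bar> - \<gamma> / 2 * (norm z)\<^sup>2)
            - Jint \<gamma> \<nu> (\<lambda>i e. - \<psi> i e) \<le> ereal (fm f m t x q y z \<psi>)
        \<and> ereal (fm f m t x q y z \<psi>) \<le>
            ereal (l t + \<delta> * supq t T q + \<beta> * \<bar>y\<bar> + \<gamma> / 2 * (norm z)\<^sup>2) + Jint \<gamma> \<nu> \<psi>"
  proof (rule eventually_mono, intro impI)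
    fix t assume t: "t \<in> {0..T}" and H: "t \<in> {0..T} \<longrightarrow>
        ereal (- l t - \<delta> * supq t T (\<lambda>v. phi m (q v)) - \<beta> * \<bar>phi m y\<bar> - \<gamma> / 2 * (norm (phiv m z))\<^sup>2)
            - Jint \<gamma> \<nu> (\<lambda>i e. - trunc m \<psi> i e) \<le> ereal (fm f m t x q y z \<psi>)
        \<and> ereal (fm f m t x q y z \<psi>) \<le>
            ereal (l t + \<delta> * supq t T (\<lambda>v. phi m (q v)) + \<beta> * \<bar>phi m y\<bar> + \<gamma> / 2 * (norm (phiv m z))\<^sup>2) + Jint \<gamma> \<nu> (trunc m \<psi>)"
    have S: "supq t T (\<lambda>v. phi m (q v)) \<le> supq t T q"
      using t by (intro supq_mono cadlag_bdd_sub[OF q]) (auto simp: phi_abs_le)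
    have Y: "\<bar>phi m y\<bar> \<le> \<bar>y\<bar>" by (rule phi_abs_le)
    have Z: "(norm (phiv m z))\<^sup>2 \<le> (norm z)\<^sup>2" by (intro power_mono phiv_norm_le) auto
    have Z2: "\<gamma> / 2 * (norm (phiv m z))\<^sup>2 \<le> \<gamma> / 2 * (norm z)\<^sup>2" using Z g by (intro mult_left_mono) auto
    have R: "- l t - \<delta> * supq t T q - \<beta> * \<bar>y\<bar> - \<gamma> / 2 * (norm z)\<^sup>2
        \<le> - l t - \<delta> * supq t T (\<lambda>v. phi m (q v)) - \<beta> * \<bar>phi m y\<bar> - \<gamma> / 2 * (norm (phiv m z))\<^sup>2"
      using mult_left_mono[OF S d] mult_left_mono[OF Y b] Z2 by linarith
    have R2: "l t + \<delta> * supq t T (\<lambda>v. phi m (q v)) + \<beta> * \<bar>phi m y\<bar> + \<gamma> / 2 * (norm (phiv m z))\<^sup>2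
        \<le> l t + \<delta> * supq t T q + \<beta> * \<bar>y\<bar> + \<gamma> / 2 * (norm z)\<^sup>2"
      using mult_left_mono[OF S d] mult_left_mono[OF Y b] Z2 by linarith
    have J1: "Jint \<gamma> \<nu> (\<lambda>i e. - trunc m \<psi> i e) \<le> Jint \<gamma> \<nu> (\<lambda>i e. - \<psi> i e)"
      by (rule Jint_mono) (rule jg_trunc(2)[OF g])
    have J2: "Jint \<gamma> \<nu> (trunc m \<psi>) \<le> Jint \<gamma> \<nu> \<psi>"
      by (rule Jint_mono) (rule jg_trunc(1)[OF g])
    have m1: "ereal (- l t - \<delta> * supq t T q - \<beta> * \<bar>y\<bar> - \<gamma> / 2 * (norm z)\<^sup>2) - Jint \<gamma> \<nu> (\<lambda>i e. - \<psi> i e)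
       \<le> ereal (- l t - \<delta> * supq t T (\<lambda>v. phi m (q v)) - \<beta> * \<bar>phi m y\<bar> - \<gamma> / 2 * (norm (phiv m z))\<^sup>2)
            - Jint \<gamma> \<nu> (\<lambda>i e. - trunc m \<psi> i e)"
      by (rule ereal_minus_mono) (use R J1 in auto)
    have m2: "ereal (l t + \<delta> * supq t T (\<lambda>v. phi m (q v)) + \<beta> * \<bar>phi m y\<bar> + \<gamma> / 2 * (norm (phiv m z))\<^sup>2) + Jint \<gamma> \<nu> (trunc m \<psi>)
       \<le> ereal (l t + \<delta> * supq t T q + \<beta> * \<bar>y\<bar> + \<gamma> / 2 * (norm z)\<^sup>2) + Jint \<gamma> \<nu> \<psi>"
      by (rule add_mono) (use R2 J2 in auto)
    from H t have lo: "ereal (- l t - \<delta> * supq t T (\<lambda>v. phi m (q v)) - \<beta> * \<bar>phi m y\<bar> - \<gamma> / 2 * (norm (phiv m z))\<^sup>2)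
            - Jint \<gamma> \<nu> (\<lambda>i e. - trunc m \<psi> i e) \<le> ereal (fm f m t x q y z \<psi>)"
        and hi: "ereal (fm f m t x q y z \<psi>) \<le>
            ereal (l t + \<delta> * supq t T (\<lambda>v. phi m (q v)) + \<beta> * \<bar>phi m y\<bar> + \<gamma> / 2 * (norm (phiv m z))\<^sup>2) + Jint \<gamma> \<nu> (trunc m \<psi>)"
      by blast+
    show "ereal (- l t - \<delta> * supq t T q - \<beta> * \<bar>y\<bar> - \<gamma> / 2 * (norm z)\<^sup>2)
            - Jint \<gamma> \<nu> (\<lambda>i e. - \<psi> i e) \<le> ereal (fm f m t x q y z \<psi>)
        \<and> ereal (fm f m t x q y z \<psi>) \<le>
            ereal (l t + \<delta> * supq t T q + \<beta> * \<bar>y\<bar> + \<gamma> / 2 * (norm z)\<^sup>2) + Jint \<gamma> \<nu> \<psi>"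
      using order_trans[OF m1 lo] order_trans[OF hi m2] by (rule conjI)
  qed
qed

lemma MS_with_fm: assumes "levy_measures \<nu>" "MS_with \<nu> M F T \<beta> \<delta> \<gamma> l f \<xi>"
  shows "MS_with \<nu> M F T \<beta> \<delta> \<gamma> l (fm f m) \<xi>"
proof -
  have H: "MS_meas \<nu> M F T f" "\<beta> \<ge> 0" "\<delta> \<ge> 0" "\<gamma> > 0" "\<forall>t\<in>{0..T}. l t > 0"
    "MS_growth \<nu> T \<beta> \<delta> \<gamma> l f" "bdd_above (range (\<lambda>x. \<bar>\<xi> x\<bar>))" "bdd_above (l ` {0..T})"
    using assms(2) unfolding MS_with_def by auto
  show ?thesis unfolding MS_with_def
    using H MS_meas_fm[OF assms(1) H(1)] MS_growth_fm[OF assms(1) H(4) H(3) H(2) H(6)] by auto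
qed



lemma Lip_fm:
  assumes lv: "levy_measures \<nu>" and T: "0 \<le> T" and K: "\<forall>Mb>0. K Mb > 0" and L: "Lip_cond \<nu> T K \<rho> \<alpha> f"
  shows "Lip_cond \<nu> T K \<rho> \<alpha> (fm f m)"
  unfolding Lip_cond_def
proof (intro conjI allI impI, goal_cases)
  case (1 Mb x q q' y y' z z' \<psi> \<psi>')
  hence Mb: "0 < Mb" and q: "cadlag_on T q" and q': "cadlag_on T q'"
    and \<psi>: "\<psi> \<in> L2nu \<nu>" and \<psi>': "\<psi>' \<in> L2nu \<nu>" and yb: "\<bar>y\<bar> \<le> Mb" "\<bar>y'\<bar> \<le> Mb"
    and Li: "Linfnorm \<nu> \<psi> \<le> ereal Mb" "Linfnorm \<nu> \<psi>' \<le> ereal Mb"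
    and sq: "supq 0 T q \<le> Mb" "supq 0 T q' \<le> Mb" by auto
  have K0: "K Mb \<ge> 0" using K Mb by (simp add: less_imp_le)
  have pre: "cadlag_on T (\<lambda>v. phi m (q v)) \<and> cadlag_on T (\<lambda>v. phi m (q' v)) \<and> trunc m \<psi> \<in> L2nu \<nu> \<and> trunc m \<psi>' \<in> L2nu \<nu>
     \<and> \<bar>phi m y\<bar> \<le> Mb \<and> \<bar>phi m y'\<bar> \<le> Mb \<and> Linfnorm \<nu> (trunc m \<psi>) \<le> ereal Mb \<and> Linfnorm \<nu> (trunc m \<psi>') \<le> ereal Mb
     \<and> supq 0 T (\<lambda>v. phi m (q v)) \<le> Mb \<and> supq 0 T (\<lambda>v. phi m (q' v)) \<le> Mb"
  proof (intro conjI)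
    show "cadlag_on T (\<lambda>v. phi m (q v))" "cadlag_on T (\<lambda>v. phi m (q' v))" using q q' by (auto intro: cadlag_phi)
    show "trunc m \<psi> \<in> L2nu \<nu>" "trunc m \<psi>' \<in> L2nu \<nu>" using \<psi> \<psi>' lv by (auto intro: L2nu_trunc)
    show "\<bar>phi m y\<bar> \<le> Mb" "\<bar>phi m y'\<bar> \<le> Mb" using yb phi_abs_le by (meson order_trans)+
    show "Linfnorm \<nu> (trunc m \<psi>) \<le> ereal Mb" using Linf_trunc_mono[OF lv \<psi>, of m] Li(1) by (rule order_trans)
    show "Linfnorm \<nu> (trunc m \<psi>') \<le> ereal Mb" using Linf_trunc_mono[OF lv \<psi>', of m] Li(2) by (rule order_trans)
    have "supq 0 T (\<lambda>v. phi m (q v)) \<le> supq 0 T q"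
      using T by (intro supq_mono cadlag_bdd_sub[OF q]) (auto simp: phi_abs_le)
    thus "supq 0 T (\<lambda>v. phi m (q v)) \<le> Mb" using sq by linarith
    have "supq 0 T (\<lambda>v. phi m (q' v)) \<le> supq 0 T q'"
      using T by (intro supq_mono cadlag_bdd_sub[OF q']) (auto simp: phi_abs_le)
    thus "supq 0 T (\<lambda>v. phi m (q' v)) \<le> Mb" using sq by linarith
  qed
  note AEf = L[unfolded Lip_cond_def, THEN conjunct1, rule_format, where Mb=Mb and x=x and z="phiv m z" and z'="phiv m z'", OF Mb pre]
  show ?case
  proof (rule eventually_mono[OF AEf], goal_cases)
    case (1 t)
    show ?case
    proof
      assume t: "t \<in> {0..T}"
      from 1 t have Hf: "\<bar>fm f m t x q y z \<psi> - fm f m t x q' y' z' \<psi>'\<bar>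
          \<le> K Mb * (supq t T (\<lambda>v. phi m (q v) - phi m (q' v)) + \<bar>phi m y - phi m y'\<bar> + L2norm \<nu> (\<lambda>i e. trunc m \<psi> i e - trunc m \<psi>' i e))
            + K Mb * (1 + norm (phiv m z) + norm (phiv m z') + L2norm \<nu> (trunc m \<psi>) + L2norm \<nu> (trunc m \<psi>')) * norm (phiv m z - phiv m z')"
        by (simp add: fm_eq)
      have S: "supq t T (\<lambda>v. phi m (q v) - phi m (q' v)) \<le> supq t T (\<lambda>v. q v - q' v)"
        using t by (intro supq_mono cadlag_bdd_diff[OF q q']) (auto simp: phi_lip)
      have Yd: "\<bar>phi m y - phi m y'\<bar> \<le> \<bar>y - y'\<bar>" by (rule phi_lip)
      have P: "L2norm \<nu> (\<lambda>i e. trunc m \<psi> i e - trunc m \<psi>' i e) \<le> L2norm \<nu> (\<lambda>i e. \<psi> i e - \<psi>' i e)"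
        by (rule L2norm_mono) (simp_all add: trunc_lip L2nu_diff_int[OF \<psi> \<psi>'])
      have N1: "norm (phiv m z) \<le> norm z" "norm (phiv m z') \<le> norm z'" by (rule phiv_norm_le)+
      have N3: "L2norm \<nu> (trunc m \<psi>) \<le> L2norm \<nu> \<psi>" by (rule L2norm_mono) (simp_all add: trunc_abs L2nu_int[OF \<psi>])
      have N4: "L2norm \<nu> (trunc m \<psi>') \<le> L2norm \<nu> \<psi>'" by (rule L2norm_mono) (simp_all add: trunc_abs L2nu_int[OF \<psi>'])
      have Zd: "norm (phiv m z - phiv m z') \<le> norm (z - z')" by (rule phiv_lip)
      have A1: "K Mb * (supq t T (\<lambda>v. phi m (q v) - phi m (q' v)) + \<bar>phi m y - phi m y'\<bar> + L2norm \<nu> (\<lambda>i e. trunc m \<psi> i e - trunc m \<psi>' i e))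
          \<le> K Mb * (supq t T (\<lambda>v. q v - q' v) + \<bar>y - y'\<bar> + L2norm \<nu> (\<lambda>i e. \<psi> i e - \<psi>' i e))"
        using S Yd P K0 by (intro mult_left_mono) auto
      have "(1 + norm (phiv m z) + norm (phiv m z') + L2norm \<nu> (trunc m \<psi>) + L2norm \<nu> (trunc m \<psi>')) * norm (phiv m z - phiv m z')
          \<le> (1 + norm z + norm z' + L2norm \<nu> \<psi> + L2norm \<nu> \<psi>') * norm (z - z')"
        using N1 N3 N4 Zd L2norm_nonneg[of \<nu> \<psi>] L2norm_nonneg[of \<nu> \<psi>'] by (intro mult_mono) auto
      hence A2: "K Mb * (1 + norm (phiv m z) + norm (phiv m z') + L2norm \<nu> (trunc m \<psi>) + L2norm \<nu> (trunc m \<psi>')) * norm (phiv m z - phiv m z')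
          \<le> K Mb * (1 + norm z + norm z' + L2norm \<nu> \<psi> + L2norm \<nu> \<psi>') * norm (z - z')"
        using K0 by (simp add: mult.assoc mult_left_mono)
      show "\<bar>fm f m t x q y z \<psi> - fm f m t x q' y' z' \<psi>'\<bar>
          \<le> K Mb * (supq t T (\<lambda>v. q v - q' v) + \<bar>y - y'\<bar> + L2norm \<nu> (\<lambda>i e. \<psi> i e - \<psi>' i e))
            + K Mb * (1 + norm z + norm z' + L2norm \<nu> \<psi> + L2norm \<nu> \<psi>') * norm (z - z')"
        using Hf A1 A2 by linarith
    qed
  qed
next
  case (2 Mb x x' q y z \<psi>)
  hence Mb: "0 < Mb" and q: "cadlag_on T q" and \<psi>: "\<psi> \<in> L2nu \<nu>" and yb: "\<bar>y\<bar> \<le> Mb"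
    and Li: "Linfnorm \<nu> \<psi> \<le> ereal Mb" and sq: "supq 0 T q \<le> Mb" by auto
  have K0: "K Mb \<ge> 0" using K Mb by (simp add: less_imp_le)
  have pre: "cadlag_on T (\<lambda>v. phi m (q v)) \<and> trunc m \<psi> \<in> L2nu \<nu> \<and> \<bar>phi m y\<bar> \<le> Mb
     \<and> Linfnorm \<nu> (trunc m \<psi>) \<le> ereal Mb \<and> supq 0 T (\<lambda>v. phi m (q v)) \<le> Mb"
  proof (intro conjI)
    show "cadlag_on T (\<lambda>v. phi m (q v))" using q by (auto intro: cadlag_phi)
    show "trunc m \<psi> \<in> L2nu \<nu>" using \<psi> lv by (auto intro: L2nu_trunc)
    show "\<bar>phi m y\<bar> \<le> Mb" using yb phi_abs_le by (meson order_trans)+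
    show "Linfnorm \<nu> (trunc m \<psi>) \<le> ereal Mb" using Linf_trunc_mono[OF lv \<psi>, of m] Li by (rule order_trans)
    have "supq 0 T (\<lambda>v. phi m (q v)) \<le> supq 0 T q"
      using T by (intro supq_mono cadlag_bdd_sub[OF q]) (auto simp: phi_abs_le)
    thus "supq 0 T (\<lambda>v. phi m (q v)) \<le> Mb" using sq by linarith
  qed
  note AEf = L[unfolded Lip_cond_def, THEN conjunct2, rule_format, where Mb=Mb and x=x and x'=x' and z="phiv m z", OF Mb pre]
  show ?case
  proof (rule eventually_mono[OF AEf], goal_cases)
    case (1 t)
    show ?case
    proof
      assume t: "t \<in> {0..T}"
      from 1 t have Hf: "\<bar>fm f m t x q y z \<psi> - fm f m t x' q y z \<psi>\<bar>
          \<le> K Mb * (1 + (max (norm x) (norm x')) powr \<rho> + (norm (phiv m z))\<^sup>2 + (L2norm \<nu> (trunc m \<psi>))\<^sup>2)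
                 * (norm (x - x')) powr \<alpha>"
        by (simp add: fm_eq)
      have Z2: "(norm (phiv m z))\<^sup>2 \<le> (norm z)\<^sup>2" by (intro power_mono phiv_norm_le) auto
      have Q2: "(L2norm \<nu> (trunc m \<psi>))\<^sup>2 \<le> (L2norm \<nu> \<psi>)\<^sup>2"
        by (intro power_mono L2norm_mono L2norm_nonneg) (simp_all add: trunc_abs L2nu_int[OF \<psi>])
      have "1 + (max (norm x) (norm x')) powr \<rho> + (norm (phiv m z))\<^sup>2 + (L2norm \<nu> (trunc m \<psi>))\<^sup>2
          \<le> 1 + (max (norm x) (norm x')) powr \<rho> + (norm z)\<^sup>2 + (L2norm \<nu> \<psi>)\<^sup>2"
        using Z2 Q2 by linarith
      hence "K Mb * (1 + (max (norm x) (norm x')) powr \<rho> + (norm (phiv m z))\<^sup>2 + (L2norm \<nu> (trunc m \<psi>))\<^sup>2)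
          \<le> K Mb * (1 + (max (norm x) (norm x')) powr \<rho> + (norm z)\<^sup>2 + (L2norm \<nu> \<psi>)\<^sup>2)"
        using K0 by (rule mult_left_mono)
      hence "K Mb * (1 + (max (norm x) (norm x')) powr \<rho> + (norm (phiv m z))\<^sup>2 + (L2norm \<nu> (trunc m \<psi>))\<^sup>2)
                 * (norm (x - x')) powr \<alpha>
          \<le> K Mb * (1 + (max (norm x) (norm x')) powr \<rho> + (norm z)\<^sup>2 + (L2norm \<nu> \<psi>)\<^sup>2) * (norm (x - x')) powr \<alpha>"
        by (intro mult_right_mono) auto
      thus "\<bar>fm f m t x q y z \<psi> - fm f m t x' q y z \<psi>\<bar>
          \<le> K Mb * (1 + (max (norm x) (norm x')) powr \<rho> + (norm z)\<^sup>2 + (L2norm \<nu> \<psi>)\<^sup>2) * (norm (x - x')) powr \<alpha>"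
        using Hf by linarith
    qed
  qed
qed

lemma MLa_with_fm: assumes "levy_measures \<nu>" "0 \<le> T" "MLa_with \<nu> T K K\<xi> \<rho> \<alpha> f \<xi>"
  shows "MLa_with \<nu> T K K\<xi> \<rho> \<alpha> (fm f m) \<xi>"
proof -
  have H: "\<forall>Mb>0. K Mb > 0" "K\<xi> \<ge> 0" "\<rho> \<ge> 0" "0 < \<alpha>" "\<alpha> \<le> 1" "Lip_cond \<nu> T K \<rho> \<alpha> f"
     "\<forall>x x'. \<bar>\<xi> x - \<xi> x'\<bar> \<le> K\<xi> * (norm (x - x')) powr \<alpha>"
    using assms(3) unfolding MLa_with_def by auto
  show ?thesis unfolding MLa_with_def
    using H Lip_fm[OF assms(1,2) H(1) H(6)] by auto
qed



lemma fm_bounded: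
  fixes f :: "('n::finite, 'd::finite, 'k::finite) driver"
  assumes lv: "levy_measures \<nu>" and MSw: "MS_with \<nu> M F T \<beta> \<delta> \<gamma> l f \<xi>"
  shows "\<exists>C. \<forall>x q y z \<psi>. cadlag_on T q \<and> \<psi> \<in> L2nu \<nu> \<longrightarrow>
            (AE t in lborel. t \<in> {0..T} \<longrightarrow> \<bar>fm f m t x q y z \<psi>\<bar> \<le> C)"
proof -
  have g: "\<gamma> > 0" and d: "\<delta> \<ge> 0" and b: "\<beta> \<ge> 0" and lpos: "\<forall>t\<in>{0..T}. l t > 0"
    and G: "MS_growth \<nu> T \<beta> \<delta> \<gamma> l f" and lb: "bdd_above (l ` {0..T})"
    using MSw unfolding MS_with_def by auto
  obtain Lm where Lm: "\<forall>t\<in>{0..T}. l t \<le> Lm" using lb by (auto simp: bdd_above_def)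
  define Cj where "Cj = (\<Sum>i\<in>UNIV. ((jg \<gamma> (real m) + jg \<gamma> (- real m)) * real m ^ 2) * (\<integral>e. e\<^sup>2 \<partial>\<nu> i))"
  define C where "C = Lm + \<delta> * real m + \<beta> * real m + \<gamma> / 2 * (real CARD('d) * real m)\<^sup>2 + Cj"
  show ?thesis
  proof (intro exI allI impI)
    fix x q y z \<psi> assume H: "cadlag_on T q \<and> \<psi> \<in> L2nu \<nu>"
    note AEg = G[unfolded MS_growth_def, rule_format, where x=x and q="\<lambda>v. phi m (q v)" and y="phi m y"
        and z="phiv m z" and \<psi>="trunc m \<psi>", OF cadlag_phi L2nu_trunc[OF lv]]
    show "AE t in lborel. t \<in> {0..T} \<longrightarrow> \<bar>fm f m t x q y z \<psi>\<bar> \<le> C"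
    proof (rule eventually_mono[OF AEg], goal_cases)
      case 1 show ?case using H by simp
    next
      case 2 show ?case using H by simp
    next
      case (3 t)
      show ?case
      proof
        assume t: "t \<in> {0..T}"
        from 3 t have lo: "ereal (- l t - \<delta> * supq t T (\<lambda>v. phi m (q v)) - \<beta> * \<bar>phi m y\<bar> - \<gamma> / 2 * (norm (phiv m z))\<^sup>2)
            - Jint \<gamma> \<nu> (\<lambda>i e. - trunc m \<psi> i e) \<le> ereal (fm f m t x q y z \<psi>)"
          and hi: "ereal (fm f m t x q y z \<psi>) \<le>
            ereal (l t + \<delta> * supq t T (\<lambda>v. phi m (q v)) + \<beta> * \<bar>phi m y\<bar> + \<gamma> / 2 * (norm (phiv m z))\<^sup>2) + Jint \<gamma> \<nu> (trunc m \<psi>)"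
          by (auto simp: fm_eq)
        have J1: "Jint \<gamma> \<nu> (\<lambda>i e. - trunc m \<psi> i e) \<le> ereal Cj" unfolding Cj_def by (rule Jint_trunc_bound(2)[OF lv g])
        have J2: "Jint \<gamma> \<nu> (trunc m \<psi>) \<le> ereal Cj" unfolding Cj_def by (rule Jint_trunc_bound(1)[OF lv g])
        have "ereal (- l t - \<delta> * supq t T (\<lambda>v. phi m (q v)) - \<beta> * \<bar>phi m y\<bar> - \<gamma> / 2 * (norm (phiv m z))\<^sup>2) - ereal Cj
            \<le> ereal (- l t - \<delta> * supq t T (\<lambda>v. phi m (q v)) - \<beta> * \<bar>phi m y\<bar> - \<gamma> / 2 * (norm (phiv m z))\<^sup>2)
            - Jint \<gamma> \<nu> (\<lambda>i e. - trunc m \<psi> i e)"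
          by (rule ereal_minus_mono) (use J1 in auto)
        from this lo have "ereal (- l t - \<delta> * supq t T (\<lambda>v. phi m (q v)) - \<beta> * \<bar>phi m y\<bar> - \<gamma> / 2 * (norm (phiv m z))\<^sup>2) - ereal Cj \<le> ereal (fm f m t x q y z \<psi>)"
          by (rule order_trans)
        hence lo': "- l t - \<delta> * supq t T (\<lambda>v. phi m (q v)) - \<beta> * \<bar>phi m y\<bar> - \<gamma> / 2 * (norm (phiv m z))\<^sup>2 - Cj
            \<le> fm f m t x q y z \<psi>" by simp
        have "ereal (l t + \<delta> * supq t T (\<lambda>v. phi m (q v)) + \<beta> * \<bar>phi m y\<bar> + \<gamma> / 2 * (norm (phiv m z))\<^sup>2) + Jint \<gamma> \<nu> (trunc m \<psi>)
            \<le> ereal (l t + \<delta> * supq t T (\<lambda>v. phi m (q v)) + \<beta> * \<bar>phi m y\<bar> + \<gamma> / 2 * (norm (phiv m z))\<^sup>2) + ereal Cj"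
          by (rule add_mono) (use J2 in auto)
        with hi have "ereal (fm f m t x q y z \<psi>) \<le> ereal (l t + \<delta> * supq t T (\<lambda>v. phi m (q v)) + \<beta> * \<bar>phi m y\<bar> + \<gamma> / 2 * (norm (phiv m z))\<^sup>2) + ereal Cj"
          by (rule order_trans)
        hence hi': "fm f m t x q y z \<psi> \<le> l t + \<delta> * supq t T (\<lambda>v. phi m (q v)) + \<beta> * \<bar>phi m y\<bar> + \<gamma> / 2 * (norm (phiv m z))\<^sup>2 + Cj"
          by simp
        have Sm: "supq t T (\<lambda>v. phi m (q v)) \<le> real m" using t by (intro supq_le_const) (auto simp: phi_abs_le_m)
        have B1: "\<delta> * supq t T (\<lambda>v. phi m (q v)) \<le> \<delta> * real m" using Sm d by (rule mult_left_mono)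
        have B2: "\<beta> * \<bar>phi m y\<bar> \<le> \<beta> * real m" using phi_abs_le_m b by (rule mult_left_mono)
        have "(norm (phiv m z))\<^sup>2 \<le> (real CARD('d) * real m)\<^sup>2" by (intro power_mono phiv_norm_m) auto
        hence B3: "\<gamma> / 2 * (norm (phiv m z))\<^sup>2 \<le> \<gamma> / 2 * (real CARD('d) * real m)\<^sup>2" using g by (intro mult_left_mono) auto
        have B4: "0 \<le> \<gamma> / 2 * (norm (phiv m z))\<^sup>2" using g by simp
        have B5: "0 < l t" "l t \<le> Lm" using lpos Lm t by auto
        show "\<bar>fm f m t x q y z \<psi>\<bar> \<le> C" unfolding C_def abs_le_iff using lo' hi' B1 B2 B3 B4 B5
          by (intro conjI) linarith+
      qed
    qed
  qed
qed

lemma fm_lip: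
  fixes f :: "('n::finite, 'd::finite, 'k::finite) driver"
  assumes lv: "levy_measures \<nu>" and T: "0 \<le> T" and m: "m \<ge> 1" and MLw: "MLa_with \<nu> T K K\<xi> \<rho> \<alpha> f \<xi>"
  shows "\<exists>L>0. \<forall>x q q' y y' z z' \<psi> \<psi>'.
            cadlag_on T q \<and> cadlag_on T q' \<and> \<psi> \<in> L2nu \<nu> \<and> \<psi>' \<in> L2nu \<nu> \<longrightarrow>
            (AE t in lborel. t \<in> {0..T} \<longrightarrow>
              \<bar>fm f m t x q y z \<psi> - fm f m t x q' y' z' \<psi>'\<bar>
                \<le> L * (supq t T (\<lambda>v. q v - q' v) + \<bar>y - y'\<bar> + norm (z - z')
                       + L2norm \<nu> (\<lambda>i e. \<psi> i e - \<psi>' i e)))"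
proof -
  have mpos: "0 < real m" using m by simp
  have Km: "K (real m) > 0" using MLw mpos unfolding MLa_with_def by auto
  have Lc: "Lip_cond \<nu> T K \<rho> \<alpha> f" using MLw unfolding MLa_with_def by auto
  define B where "B = L2norm \<nu> (\<lambda>i e. real m ^ 2 * e)"
  define c where "c = 1 + 2 * (real CARD('d) * real m) + 2 * B"
  have B0: "0 \<le> B" unfolding B_def by (rule L2norm_nonneg)
  have c1: "1 \<le> c" unfolding c_def using B0 by simp
  have intB: "\<And>i. integrable (\<nu> i) (\<lambda>e. (real m ^ 2 * e)\<^sup>2)"
    using levy_sq[OF lv] by (simp add: power_mult_distrib)
  show ?thesis
  proof (intro exI[of _ "K (real m) * c"] conjI allI impI)
    show "0 < K (real m) * c" using Km c1 by simp
    fix x q q' y y' z z' \<psi> \<psi>' assume H: "cadlag_on T q \<and> cadlag_on T q' \<and> \<psi> \<in> L2nu \<nu> \<and> \<psi>' \<in> L2nu \<nu>"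
    hence q: "cadlag_on T q" and q': "cadlag_on T q'" and \<psi>: "\<psi> \<in> L2nu \<nu>" and \<psi>': "\<psi>' \<in> L2nu \<nu>" by auto
    have pre: "cadlag_on T (\<lambda>v. phi m (q v)) \<and> cadlag_on T (\<lambda>v. phi m (q' v)) \<and> trunc m \<psi> \<in> L2nu \<nu> \<and> trunc m \<psi>' \<in> L2nu \<nu>
       \<and> \<bar>phi m y\<bar> \<le> real m \<and> \<bar>phi m y'\<bar> \<le> real m \<and> Linfnorm \<nu> (trunc m \<psi>) \<le> ereal (real m) \<and> Linfnorm \<nu> (trunc m \<psi>') \<le> ereal (real m)
       \<and> supq 0 T (\<lambda>v. phi m (q v)) \<le> real m \<and> supq 0 T (\<lambda>v. phi m (q' v)) \<le> real m"
    proof (intro conjI)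
      show "cadlag_on T (\<lambda>v. phi m (q v))" "cadlag_on T (\<lambda>v. phi m (q' v))" using q q' by (auto intro: cadlag_phi)
      show "trunc m \<psi> \<in> L2nu \<nu>" "trunc m \<psi>' \<in> L2nu \<nu>" using \<psi> \<psi>' lv by (auto intro: L2nu_trunc)
      show "\<bar>phi m y\<bar> \<le> real m" "\<bar>phi m y'\<bar> \<le> real m" by (rule phi_abs_le_m)+
      show "Linfnorm \<nu> (trunc m \<psi>) \<le> ereal (real m)" by (rule Linf_trunc_m[OF lv \<psi>])
      show "Linfnorm \<nu> (trunc m \<psi>') \<le> ereal (real m)" by (rule Linf_trunc_m[OF lv \<psi>'])
      show "supq 0 T (\<lambda>v. phi m (q v)) \<le> real m" "supq 0 T (\<lambda>v. phi m (q' v)) \<le> real m"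
        using T by (auto intro!: supq_le_const simp: phi_abs_le_m)
    qed
    note AEf = Lc[unfolded Lip_cond_def, THEN conjunct1, rule_format, where Mb="real m" and x=x and z="phiv m z" and z'="phiv m z'", OF mpos pre]
    show "AE t in lborel. t \<in> {0..T} \<longrightarrow>
              \<bar>fm f m t x q y z \<psi> - fm f m t x q' y' z' \<psi>'\<bar>
                \<le> K (real m) * c * (supq t T (\<lambda>v. q v - q' v) + \<bar>y - y'\<bar> + norm (z - z')
                       + L2norm \<nu> (\<lambda>i e. \<psi> i e - \<psi>' i e))"
    proof (rule eventually_mono[OF AEf], goal_cases)
      case (1 t)
      show ?case
      proof
        assume t: "t \<in> {0..T}"
        from 1 t have Hf: "\<bar>fm f m t x q y z \<psi> - fm f m t x q' y' z' \<psi>'\<bar>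
            \<le> K (real m) * (supq t T (\<lambda>v. phi m (q v) - phi m (q' v)) + \<bar>phi m y - phi m y'\<bar> + L2norm \<nu> (\<lambda>i e. trunc m \<psi> i e - trunc m \<psi>' i e))
              + K (real m) * (1 + norm (phiv m z) + norm (phiv m z') + L2norm \<nu> (trunc m \<psi>) + L2norm \<nu> (trunc m \<psi>')) * norm (phiv m z - phiv m z')"
          by (simp add: fm_eq)
        have S: "supq t T (\<lambda>v. phi m (q v) - phi m (q' v)) \<le> supq t T (\<lambda>v. q v - q' v)"
          using t by (intro supq_mono cadlag_bdd_diff[OF q q']) (auto simp: phi_lip)
        have S0: "0 \<le> supq t T (\<lambda>v. q v - q' v)"
          using t by (intro supq_nonneg cadlag_bdd_diff[OF q q']) auto
        have Yd: "\<bar>phi m y - phi m y'\<bar> \<le> \<bar>y - y'\<bar>" by (rule phi_lip)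
        have P: "L2norm \<nu> (\<lambda>i e. trunc m \<psi> i e - trunc m \<psi>' i e) \<le> L2norm \<nu> (\<lambda>i e. \<psi> i e - \<psi>' i e)"
          by (rule L2norm_mono) (simp_all add: trunc_lip L2nu_diff_int[OF \<psi> \<psi>'])
        have P0: "0 \<le> L2norm \<nu> (\<lambda>i e. \<psi> i e - \<psi>' i e)" by (rule L2norm_nonneg)
        have N1: "norm (phiv m z) \<le> real CARD('d) * real m" "norm (phiv m z') \<le> real CARD('d) * real m"
          by (rule phiv_norm_m)+
        have N3: "L2norm \<nu> (trunc m \<psi>) \<le> B" unfolding B_def
          by (rule L2norm_mono[OF _ intB]) (simp add: trunc_small abs_mult)
        have N4: "L2norm \<nu> (trunc m \<psi>') \<le> B" unfolding B_def
          by (rule L2norm_mono[OF _ intB]) (simp add: trunc_small abs_mult)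
        have Zd: "norm (phiv m z - phiv m z') \<le> norm (z - z')" by (rule phiv_lip)
        have "K (real m) * (supq t T (\<lambda>v. phi m (q v) - phi m (q' v)) + \<bar>phi m y - phi m y'\<bar> + L2norm \<nu> (\<lambda>i e. trunc m \<psi> i e - trunc m \<psi>' i e))
            \<le> K (real m) * (supq t T (\<lambda>v. q v - q' v) + \<bar>y - y'\<bar> + L2norm \<nu> (\<lambda>i e. \<psi> i e - \<psi>' i e))"
          using S Yd P Km by (intro mult_left_mono) auto
        also have "\<dots> \<le> K (real m) * (c * (supq t T (\<lambda>v. q v - q' v) + \<bar>y - y'\<bar> + L2norm \<nu> (\<lambda>i e. \<psi> i e - \<psi>' i e)))"
        proof (rule mult_left_mono)
          have X0: "0 \<le> supq t T (\<lambda>v. q v - q' v) + \<bar>y - y'\<bar> + L2norm \<nu> (\<lambda>i e. \<psi> i e - \<psi>' i e)" using S0 P0 by simp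
          show "supq t T (\<lambda>v. q v - q' v) + \<bar>y - y'\<bar> + L2norm \<nu> (\<lambda>i e. \<psi> i e - \<psi>' i e)
              \<le> c * (supq t T (\<lambda>v. q v - q' v) + \<bar>y - y'\<bar> + L2norm \<nu> (\<lambda>i e. \<psi> i e - \<psi>' i e))"
            using mult_right_mono[OF c1 X0] by simp
          show "0 \<le> K (real m)" using Km by simp
        qed
        finally have A1: "K (real m) * (supq t T (\<lambda>v. phi m (q v) - phi m (q' v)) + \<bar>phi m y - phi m y'\<bar> + L2norm \<nu> (\<lambda>i e. trunc m \<psi> i e - trunc m \<psi>' i e))
            \<le> K (real m) * (c * (supq t T (\<lambda>v. q v - q' v) + \<bar>y - y'\<bar> + L2norm \<nu> (\<lambda>i e. \<psi> i e - \<psi>' i e)))" .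
        have "(1 + norm (phiv m z) + norm (phiv m z') + L2norm \<nu> (trunc m \<psi>) + L2norm \<nu> (trunc m \<psi>')) * norm (phiv m z - phiv m z')
            \<le> c * norm (z - z')"
        proof (rule mult_mono)
          show "1 + norm (phiv m z) + norm (phiv m z') + L2norm \<nu> (trunc m \<psi>) + L2norm \<nu> (trunc m \<psi>') \<le> c"
            using N1 N3 N4 c_def by linarith
          show "norm (phiv m z - phiv m z') \<le> norm (z - z')" by (rule Zd)
          show "0 \<le> c" using c1 by simp
          show "0 \<le> norm (phiv m z - phiv m z')" by simp
        qed
        hence "K (real m) * ((1 + norm (phiv m z) + norm (phiv m z') + L2norm \<nu> (trunc m \<psi>) + L2norm \<nu> (trunc m \<psi>')) * norm (phiv m z - phiv m z'))
            \<le> K (real m) * (c * norm (z - z'))"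
          by (rule mult_left_mono) (use Km in simp)
        hence A2: "K (real m) * (1 + norm (phiv m z) + norm (phiv m z') + L2norm \<nu> (trunc m \<psi>) + L2norm \<nu> (trunc m \<psi>')) * norm (phiv m z - phiv m z')
            \<le> K (real m) * (c * norm (z - z'))"
          by (simp only: mult.assoc)
        have E: "K (real m) * c * (supq t T (\<lambda>v. q v - q' v) + \<bar>y - y'\<bar> + norm (z - z') + L2norm \<nu> (\<lambda>i e. \<psi> i e - \<psi>' i e))
           = K (real m) * (c * (supq t T (\<lambda>v. q v - q' v) + \<bar>y - y'\<bar> + L2norm \<nu> (\<lambda>i e. \<psi> i e - \<psi>' i e))) + K (real m) * (c * norm (z - z'))"
          by (simp add: algebra_simps)
        show "\<bar>fm f m t x q y z \<psi> - fm f m t x q' y' z' \<psi>'\<bar>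
                \<le> K (real m) * c * (supq t T (\<lambda>v. q v - q' v) + \<bar>y - y'\<bar> + norm (z - z')
                       + L2norm \<nu> (\<lambda>i e. \<psi> i e - \<psi>' i e))"
          unfolding E by (rule order_trans[OF Hf add_mono[OF A1 A2]])
      qed
    qed
  qed
qed


theorem lemma4p2:
  fixes T :: real
    and \<nu> :: "'k::finite \<Rightarrow> real measure"
    and M :: "'w measure" and F :: "real \<Rightarrow> 'w measure"
    and f :: "('n::finite, 'd::finite, 'k) driver"
    and \<xi> :: "real^'n \<Rightarrow> real"
  assumes "T > 0"
    and "levy_measures \<nu>"
    and "filtered_space M F"
    and "MS \<nu> M F T f \<xi>"
    and "MLa \<nu> T f \<xi>"
  shows "(\<exists>\<beta> \<delta> \<gamma> l. \<forall>m\<ge>1. MS_with \<nu> M F T \<beta> \<delta> \<gamma> l (fm f m) \<xi>)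
    \<and> (\<exists>K K\<xi> \<rho> \<alpha>. \<forall>m\<ge>1. MLa_with \<nu> T K K\<xi> \<rho> \<alpha> (fm f m) \<xi>)
    \<and> (\<forall>m\<ge>1.
         (\<exists>C. \<forall>x q y z \<psi>. cadlag_on T q \<and> \<psi> \<in> L2nu \<nu> \<longrightarrow>
            (AE t in lborel. t \<in> {0..T} \<longrightarrow> \<bar>fm f m t x q y z \<psi>\<bar> \<le> C))
       \<and> (\<exists>L>0. \<forall>x q q' y y' z z' \<psi> \<psi>'.
            cadlag_on T q \<and> cadlag_on T q' \<and> \<psi> \<in> L2nu \<nu> \<and> \<psi>' \<in> L2nu \<nu> \<longrightarrow>
            (AE t in lborel. t \<in> {0..T} \<longrightarrow>
              \<bar>fm f m t x q y z \<psi> - fm f m t x q' y' z' \<psi>'\<bar>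
                \<le> L * (supq t T (\<lambda>v. q v - q' v) + \<bar>y - y'\<bar> + norm (z - z')
                       + L2norm \<nu> (\<lambda>i e. \<psi> i e - \<psi>' i e)))))"
proof -
  obtain \<beta> \<delta> \<gamma> l where MSw: "MS_with \<nu> M F T \<beta> \<delta> \<gamma> l f \<xi>" using assms(4) unfolding MS_def by blast
  obtain K K\<xi> \<rho> \<alpha> where MLw: "MLa_with \<nu> T K K\<xi> \<rho> \<alpha> f \<xi>" using assms(5) unfolding MLa_def by blast
  have T0: "0 \<le> T" using assms(1) by simp
  have A: "\<forall>m\<ge>1. MS_with \<nu> M F T \<beta> \<delta> \<gamma> l (fm f m) \<xi>" by (intro allI impI MS_with_fm[OF assms(2) MSw])
  have B: "\<forall>m\<ge>1. MLa_with \<nu> T K K\<xi> \<rho> \<alpha> (fm f m) \<xi>" by (intro allI impI MLa_with_fm[OF assms(2) T0 MLw])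
  show ?thesis
    apply (intro conjI)
      apply (rule exI[of _ \<beta>], rule exI[of _ \<delta>], rule exI[of _ \<gamma>], rule exI[of _ l], rule A)
     apply (rule exI[of _ K], rule exI[of _ K\<xi>], rule exI[of _ \<rho>], rule exI[of _ \<alpha>], rule B)
    apply (intro allI impI conjI)
     apply (rule fm_bounded[OF assms(2) MSw])
    apply (erule fm_lip[OF assms(2) T0 _ MLw])
    done
qed

end
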